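(* Let $d\ge2$ and $\mathcal A=\{e_1,\dots,e_d\}\subset\mathbb R^d$ be the standard basis (vertices of the probability simplex). Then $\mathrm{PWidth}(\mathcal A)$ equals the width of the simplex $\mathrm{conv}(\mathcal A)$ (the minimum over unit directions $u$ in the linear span of $\mathrm{conv}(\mathcal A)-\mathrm{conv}(\mathcal A)$ of $\max_{s,v\in\mathcal A}\langle u,s-v\rangle$), namely $2/\sqrt d$ if $d$ is even and $2/\sqrt{d-1/d}$ if $d$ is odd.
   Context: Euclidean norm and inner product. For a finite set $\mathcal B\subseteq\mathbb R^d$ and $x\in\mathrm{conv}(\mathcal B)$, $\mathcal S_x(\mathcal B)$ is the family of subsets $S\subseteq\mathcal B$ such that $x$ is a proper convex combination of all elements of $S$ (all coefficients positive). For $r\ne0$, $\mathrm{PdirW}(\mathcal B,r,x):=\min_{S\in\mathcal S_x(\mathcal B)}\max_{s\in\mathcal B,\,v\in S}\langle r/\|r\|,s-v\rangle$. The pyramidal width is $\mathrm{PWidth}(\mathcal A):=\inf\{\mathrm{PdirW}(\mathcal K\cap\mathcal A,r,x)\}$ over all nonempty faces $\mathcal K$ of $\mathrm{conv}(\mathcal A)$ (including $\mathrm{conv}(\mathcal A)$ itself), all $x\in\mathcal K$, and all $r\in\mathrm{cone}(\mathcal K-x)\setminus\{0\}$, where $\mathrm{cone}(\mathcal K-x)=\{\sum_i\lambda_i(y_i-x):\lambda_i\ge0,\ y_i\in\mathcal K\}$. *)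

theory Defs
  imports "HOL-Analysis.Analysis"
begin

definition proper_supports :: "'a::real_vector set \<Rightarrow> 'a \<Rightarrow> 'a set set" where
  "proper_supports B x = {S. S \<subseteq> B \<and> S \<noteq> {} \<and>
     (\<exists>c. (\<forall>v\<in>S. c v > 0) \<and> sum c S = 1 \<and> (\<Sum>v\<in>S. c v *\<^sub>R v) = x)}"

definition PdirW :: "'a::real_inner set \<Rightarrow> 'a \<Rightarrow> 'a \<Rightarrow> real" where
  "PdirW B r x = Min ((\<lambda>S. Max {inner (r /\<^sub>R norm r) (s - v) | s v. s \<in> B \<and> v \<in> S})
                     ` proper_supports B x)"

definition nonneg_cone :: "'a::real_vector set \<Rightarrow> 'a set" where
  "nonneg_cone S = {y. \<exists>F c. finite F \<and> F \<subseteq> S \<and> (\<forall>v\<in>F. c v \<ge> 0) \<and>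
                        y = (\<Sum>v\<in>F. c v *\<^sub>R v)}"

definition PWidth :: "'a::real_inner set \<Rightarrow> real" where
  "PWidth A = Inf {PdirW (K \<inter> A) r x | K x r.
      K face_of convex hull A \<and> K \<noteq> {} \<and> x \<in> K \<and>
      r \<in> nonneg_cone ((\<lambda>y. y - x) ` K) \<and> r \<noteq> 0}"

definition simplex_width :: "'a::real_inner set \<Rightarrow> real" where
  "simplex_width A = Inf {Max {inner u (s - v) | s v. s \<in> A \<and> v \<in> A} | u.
      u \<in> span {a - b | a b. a \<in> convex hull A \<and> b \<in> convex hull A} \<and> norm u = 1}"

end

theory Submission
  imports Defs
begin

lemma sum_split2:
  assumes "finite I" "p \<in> I" "q \<in> I" "p \<noteq> q"
  shows "(\<Sum>i\<in>I. h i) = h p + h q + (\<Sum>i\<in>I - {p,q}. h i)"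
proof -
  have "I = insert p (insert q (I - {p,q}))" using assms by auto
  then have "(\<Sum>i\<in>I. h i) = (\<Sum>i\<in>insert p (insert q (I - {p,q})). h i)" by simp
  also have "\<dots> = h p + h q + (\<Sum>i\<in>I - {p,q}. h i)"
    using assms by (simp add: sum.insert add.assoc)
  finally show ?thesis .
qed

lemma dist_sum_bound:
  fixes f :: "'a \<Rightarrow> real"
  shows "finite I \<Longrightarrow> (\<forall>i\<in>I. m \<le> f i \<and> f i \<le> M) \<Longrightarrow>
    2 * (\<Sum>i\<in>I. \<Sum>j\<in>I. \<bar>f i - f j\<bar>) \<le> (M - m) * (real (card I)^2 - real (card I mod 2))"
proof (induction "card I" arbitrary: I rule: less_induct)
  case less
  show ?case
  proof (cases "card I < 2")
    case True
    then have "card I = 0 \<or> card I = 1" by auto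
    then show ?thesis
    proof
      assume "card I = 0" then have "I = {}" using less by auto
      then show ?thesis by simp
    next
      assume "card I = 1" then obtain a where "I = {a}" by (auto simp: card_Suc_eq)
      then show ?thesis by simp
    qed
  next
    case False
    then have ne: "I \<noteq> {}" by (metis card.empty less_2_cases_iff)
    have "Max (f ` I) \<in> f ` I" using Max_in[of "f ` I"] less(2) ne by blast
    then obtain p where p: "p \<in> I" "f p = Max (f ` I)" by (metis imageE)
    have "Min (f ` I) \<in> f ` I" using Min_in[of "f ` I"] less(2) ne by blast
    then obtain q where q: "q \<in> I" "f q = Min (f ` I)" by (metis imageE)
    have fp: "\<forall>i\<in>I. f i \<le> f p" using p less(2) by simp
    have fq: "\<forall>i\<in>I. f q \<le> f i" using q less(2) by simp
    have "m \<le> f p \<and> f p \<le> M" using less(3) p(1) by blast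
    then have Mm: "m \<le> M" by linarith
    show ?thesis
    proof (cases "f p = f q")
      case True
      have eqp: "f i = f p" if "i \<in> I" for i
      proof -
        have "f i \<le> f p" "f q \<le> f i" using fp fq that by auto
        then show ?thesis using True by linarith
      qed
      have "(\<Sum>i\<in>I. \<Sum>j\<in>I. \<bar>f i - f j\<bar>) = 0"
      proof (intro sum.neutral ballI)
        fix i j assume "i \<in> I" "j \<in> I"
        then show "\<bar>f i - f j\<bar> = 0" using eqp[of i] eqp[of j] by simp
      qed
      moreover have "real (card I mod 2) \<le> real (card I)^2"
      proof -
        have "card I mod 2 \<le> card I ^ 2" using False
          proof -
          have "card I mod 2 \<le> card I" by simp
          also have "card I \<le> card I ^ 2" by (simp add: power2_eq_square)
          finally show ?thesis .
        qed
        then have "real (card I mod 2) \<le> real (card I ^ 2)" by (simp only: of_nat_le_iff)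
        then show ?thesis by simp
      qed
      ultimately show ?thesis using Mm by simp
    next
      case False2: False
      then have pq: "p \<noteq> q" by auto
      define J where "J = I - {p,q}"
      have fJ: "finite J" using less by (simp add: J_def)
      have cJ: "card J = card I - 2" using less p q pq by (simp add: J_def card_Diff_subset)
      have cJr: "real (card J) = real (card I) - 2" using cJ False by simp
      have modJ: "card J mod 2 = card I mod 2" using cJ False
        by (metis add_diff_inverse_nat mod_add_self1 not_less)
      have IH: "2 * (\<Sum>i\<in>J. \<Sum>j\<in>J. \<bar>f i - f j\<bar>) \<le> (M - m) * (real (card J)^2 - real (card J mod 2))"
        using less(1)[of J] fJ cJ False less(3) by (auto simp: J_def)
      have inner: "(\<Sum>j\<in>I. \<bar>f i - f j\<bar>) = \<bar>f i - f p\<bar> + \<bar>f i - f q\<bar> + (\<Sum>j\<in>J. \<bar>f i - f j\<bar>)" for i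
        using sum_split2[OF less(2) p(1) q(1) pq] J_def by simp
      have "(\<Sum>i\<in>I. \<Sum>j\<in>I. \<bar>f i - f j\<bar>) =
          (\<Sum>i\<in>I. \<bar>f i - f p\<bar> + \<bar>f i - f q\<bar> + (\<Sum>j\<in>J. \<bar>f i - f j\<bar>))"
        using inner by simp
      also have "\<dots> = (\<bar>f p - f q\<bar> + (\<Sum>j\<in>J. \<bar>f p - f j\<bar>)) + (\<bar>f q - f p\<bar> + (\<Sum>j\<in>J. \<bar>f q - f j\<bar>))
           + (\<Sum>i\<in>J. \<bar>f i - f p\<bar> + \<bar>f i - f q\<bar> + (\<Sum>j\<in>J. \<bar>f i - f j\<bar>))"
        using sum_split2[OF less(2) p(1) q(1) pq, of "\<lambda>i. \<bar>f i - f p\<bar> + \<bar>f i - f q\<bar> + (\<Sum>j\<in>J. \<bar>f i - f j\<bar>)"] J_def by simp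
      also have "\<dots> = 2 * (f p - f q) + (\<Sum>j\<in>J. \<bar>f p - f j\<bar> + \<bar>f q - f j\<bar>)
           + (\<Sum>i\<in>J. \<bar>f i - f p\<bar> + \<bar>f i - f q\<bar>) + (\<Sum>i\<in>J. \<Sum>j\<in>J. \<bar>f i - f j\<bar>)"
        using fq p(1) by (simp add: sum.distrib abs_minus_commute)
      also have "\<dots> = 2 * (f p - f q) + (\<Sum>j\<in>J. f p - f q)
           + (\<Sum>i\<in>J. f p - f q) + (\<Sum>i\<in>J. \<Sum>j\<in>J. \<bar>f i - f j\<bar>)"
      proof -
        have a: "\<And>j. j \<in> J \<Longrightarrow> \<bar>f p - f j\<bar> + \<bar>f q - f j\<bar> = f p - f q"
          proof -
          fix j assume "j \<in> J" then have "f q \<le> f j" "f j \<le> f p" using fp fq unfolding J_def by auto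
          then show "\<bar>f p - f j\<bar> + \<bar>f q - f j\<bar> = f p - f q" by (simp add: abs_if)
        qed
        have b: "\<And>j. j \<in> J \<Longrightarrow> \<bar>f j - f p\<bar> + \<bar>f j - f q\<bar> = f p - f q"
          proof -
          fix j assume "j \<in> J" then have "f q \<le> f j" "f j \<le> f p" using fp fq unfolding J_def by auto
          then show "\<bar>f j - f p\<bar> + \<bar>f j - f q\<bar> = f p - f q" by (simp add: abs_if)
        qed
        show ?thesis using sum.cong[OF refl a, of J] sum.cong[OF refl b, of J] by simp
      qed
      finally have eq: "(\<Sum>i\<in>I. \<Sum>j\<in>I. \<bar>f i - f j\<bar>) = 2 * (f p - f q) + 2 * real (card J) * (f p - f q)
           + (\<Sum>i\<in>J. \<Sum>j\<in>J. \<bar>f i - f j\<bar>)" by simp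
      have "m \<le> f q \<and> f p \<le> M" using less(3) p(1) q(1) by blast
      then have W: "f p - f q \<le> M - m" by linarith
      have W0: "0 \<le> f p - f q" using fp q by auto
      have "2 * (2 * (f p - f q) + 2 * real (card J) * (f p - f q)) \<le> 2 * (2 * (M - m) + 2 * real (card J) * (M - m))"
        using W W0 by (intro mult_left_mono add_mono mult_left_mono) auto
      moreover have "(M - m) * (real (card I)^2 - real (card I mod 2)) =
         (M - m) * (real (card J)^2 - real (card J mod 2)) + 2 * (2 * (M - m) + 2 * real (card J) * (M - m))"
      proof -
        have cI: "real (card I) = real (card J) + 2" using cJr by simp
        show ?thesis unfolding cI modJ by (simp add: algebra_simps power2_eq_square)
      qed
      ultimately show ?thesis unfolding eq using IH by (smt (verit) distrib_left)
    qed
  qed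
qed
definition cw :: "nat \<Rightarrow> real" where
  "cw d = sqrt (4 * real d / (real d ^ 2 - real (d mod 2)))"

lemma dd_pos: "2 \<le> d \<Longrightarrow> 0 < real d ^ 2 - real (d mod 2)"
proof -
  assume "2 \<le> d"
  then have "real (d mod 2) \<le> 1" "4 \<le> real d ^ 2"
    using power_mono[of 2 "real d" 2] by auto
  then show ?thesis by linarith
qed

lemma key:
  fixes u :: "real^'n"
  assumes d2: "CARD('n) \<ge> 2" and s0: "(\<Sum>i\<in>UNIV. u$i) = 0" and n1: "norm u = 1"
    and b: "\<forall>i. m \<le> u$i \<and> u$i \<le> M"
  shows "cw CARD('n) \<le> M - m"
proof -
  define d where "d = real CARD('n)"
  define dd where "dd = real CARD('n) ^ 2 - real (CARD('n) mod 2)"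
  have ddp: "0 < dd" unfolding dd_def using dd_pos[OF d2] .
  have sq: "(\<Sum>i\<in>UNIV. u$i * u$i) = 1"
  proof -
    have "norm u ^ 2 = inner u u" by (rule power2_norm_eq_inner)
    then show ?thesis using n1 by (simp add: inner_vec_def)
  qed
  have W0: "0 \<le> M - m" using b by (meson order_trans diff_ge_0_iff_ge)
  have e1: "(\<Sum>i\<in>UNIV. \<Sum>j\<in>UNIV. (u$i - u$j)^2) = 2 * d"
  proof -
    have "(\<Sum>i\<in>UNIV. \<Sum>j\<in>UNIV. (u$i - u$j)^2) =
       (\<Sum>i\<in>UNIV. \<Sum>j\<in>UNIV. u$i * u$i + u$j * u$j - 2 * u$i * u$j)"
      by (simp add: power2_eq_square algebra_simps)
    also have "\<dots> = (\<Sum>i\<in>UNIV. d * (u$i * u$i) + 1 - 2 * u$i * (\<Sum>j\<in>UNIV. u$j))"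
      by (simp add: sum.distrib sum_subtractf sq sum_distrib_left d_def)
    also have "\<dots> = 2 * d"
      by (simp add: s0 sum.distrib sum_distrib_left[symmetric] sq d_def)
    finally show ?thesis .
  qed
  have e2: "(\<Sum>i\<in>UNIV. \<Sum>j\<in>UNIV. (u$i - u$j)^2) \<le> (M - m) * (\<Sum>i\<in>UNIV. \<Sum>j\<in>UNIV. \<bar>u$i - u$j\<bar>)"
    unfolding sum_distrib_left
  proof (intro sum_mono)
    fix i j
    have "\<bar>u$i - u$j\<bar> \<le> M - m" using b[rule_format, of i] b[rule_format, of j] by auto
    then have "\<bar>u$i - u$j\<bar> * \<bar>u$i - u$j\<bar> \<le> (M - m) * \<bar>u$i - u$j\<bar>"
      by (intro mult_right_mono) auto
    then show "(u$i - u$j)^2 \<le> (M - m) * \<bar>u$i - u$j\<bar>"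
      by (simp add: power2_eq_square)
  qed
  have e3: "2 * (\<Sum>i\<in>UNIV. \<Sum>j\<in>UNIV. \<bar>u$i - u$j\<bar>) \<le> (M - m) * dd"
    using dist_sum_bound[of "UNIV :: 'n set" m "\<lambda>i. u$i" M] b unfolding dd_def by simp
  have "4 * d \<le> 2 * ((M - m) * (\<Sum>i\<in>UNIV. \<Sum>j\<in>UNIV. \<bar>u$i - u$j\<bar>))"
    using e1 e2 by linarith
  also have "\<dots> = (M - m) * (2 * (\<Sum>i\<in>UNIV. \<Sum>j\<in>UNIV. \<bar>u$i - u$j\<bar>))" by simp
  also have "\<dots> \<le> (M - m) * ((M - m) * dd)" using e3 W0 by (intro mult_left_mono)
  finally have "4 * d / dd \<le> (M - m)^2" using ddp by (simp add: field_simps power2_eq_square)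
  then have "sqrt (4 * d / dd) \<le> sqrt ((M - m)^2)" by (rule real_sqrt_le_mono)
  then show ?thesis using W0 unfolding cw_def d_def dd_def by simp
qed


lemma axis_nth_if: "(axis i (1::real) :: real^'n) $ j = (if j = i then 1 else 0)"
  by (simp add: axis_def)

lemma hull_coords:
  fixes y :: "real^'n"
  assumes "y \<in> convex hull (range (\<lambda>i. axis i 1))"
  shows "(\<forall>j. 0 \<le> y$j) \<and> (\<Sum>j\<in>UNIV. y$j) = 1"
proof -
  let ?C = "{y::real^'n. (\<forall>j. 0 \<le> y$j) \<and> (\<Sum>j\<in>UNIV. y$j) = 1}"
  have "convex ?C"
    unfolding convex_def
    by (auto simp: sum.distrib sum_distrib_left[symmetric])
  moreover have "range (\<lambda>i. axis i 1) \<subseteq> ?C"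
    by (auto simp: axis_nth_if)
  ultimately have "convex hull (range (\<lambda>i. axis i 1)) \<subseteq> ?C"
    by (rule hull_minimal[rotated])
  then show ?thesis using assms by blast
qed

lemma coords_hull:
  fixes y :: "real^'n"
  assumes "\<forall>j. 0 \<le> y$j" "(\<Sum>j\<in>UNIV. y$j) = 1"
  shows "y \<in> convex hull (range (\<lambda>i. axis i 1))"
proof -
  have "y = (\<Sum>i\<in>UNIV. y$i *\<^sub>R axis i 1)"
    by (simp add: vec_eq_iff axis_nth_if if_distrib cong: if_cong)
  also have "\<dots> \<in> convex hull (range (\<lambda>i. axis i 1))"
    by (rule convex_sum) (use assms in \<open>auto intro: hull_inc\<close>)
  finally show ?thesis .
qed

lemma inner_axis_diff: "inner (u::real^'n) (axis i 1 - axis j 1) = u$i - u$j"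
  by (simp add: inner_diff_right inner_axis)

lemma span_sum_zero:
  fixes u :: "real^'n"
  assumes "u \<in> span {a - b | a b. a \<in> convex hull (range (\<lambda>i. axis i 1)) \<and> b \<in> convex hull (range (\<lambda>i. axis i 1))}"
  shows "(\<Sum>j\<in>UNIV. u$j) = 0"
proof -
  let ?T = "{u::real^'n. (\<Sum>j\<in>UNIV. u$j) = 0}"
  have "subspace ?T"
    unfolding subspace_def by (auto simp: sum.distrib sum_distrib_left[symmetric])
  moreover have "{a - b | a b. a \<in> convex hull (range (\<lambda>i. axis i 1)) \<and> b \<in> convex hull (range (\<lambda>i. axis i 1))} \<subseteq> ?T"
  proof
    fix w :: "real^'n" assume "w \<in> {a - b | a b. a \<in> convex hull (range (\<lambda>i. axis i 1)) \<and> b \<in> convex hull (range (\<lambda>i. axis i (1::real)))}"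
    then obtain a b where ab: "w = a - b" "a \<in> convex hull (range (\<lambda>i. axis i 1))" "b \<in> convex hull (range (\<lambda>i. axis i (1::real)))" by blast
    have "(\<Sum>j\<in>UNIV. w$j) = (\<Sum>j\<in>UNIV. a$j) - (\<Sum>j\<in>UNIV. b$j)" using ab(1) by (simp add: sum_subtractf)
    then show "w \<in> ?T" using hull_coords[OF ab(2)] hull_coords[OF ab(3)] by simp
  qed
  ultimately show ?thesis using span_minimal assms by blast
qed

lemma pair_image: "{f s v | s v. s \<in> B \<and> v \<in> S} = (\<lambda>(s,v). f s v) ` (B \<times> S)"
  by auto


lemma k_identity:
  fixes d :: nat
  shows "4 * (real (d div 2) * (real d - real (d div 2))) = real d ^ 2 - real (d mod 2)"
proof (cases "even d")
  case True
  then obtain t where "d = 2 * t" by blast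
  then show ?thesis by (simp add: power2_eq_square algebra_simps)
next
  case False
  then obtain t where t: "d = 2 * t + 1" using oddE by blast
  have "d mod 2 = 1" "d div 2 = t" using t by auto
  then show ?thesis using t by (simp add: power2_eq_square algebra_simps)
qed

lemma witness:
  assumes d2: "CARD('n) \<ge> 2"
  obtains r x y :: "real^'n" where
    "x \<in> convex hull (range (\<lambda>i. axis i 1))" "y \<in> convex hull (range (\<lambda>i. axis i 1))"
    "r = real CARD('n) *\<^sub>R (y - x)" "r \<noteq> 0" "x = (\<chi> i. 1 / real CARD('n))"
    "\<And>i j. inner (r /\<^sub>R norm r) (axis i 1 - axis j 1) \<le> cw CARD('n)"
proof -
  define d where "d = CARD('n)"
  define k where "k = d div 2"
  have kd: "k \<le> d" unfolding k_def by simp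
  have k0: "0 < k" using d2 unfolding k_def d_def by simp
  have kd2: "k < d" using d2 unfolding k_def d_def by simp
  obtain P :: "'n set" where P: "card P = k" using obtain_subset_with_card_n[of k "UNIV :: 'n set"] kd
    unfolding d_def by auto
  have cP: "card (UNIV - P) = d - k" using P unfolding d_def by (simp add: card_Diff_subset)
  have dpos: "0 < real d" using d2 unfolding d_def by simp
  define r :: "real^'n" where "r = (\<chi> i. (if i \<in> P then 1 else 0) - real k / real d)"
  define x :: "real^'n" where "x = (\<chi> i. 1 / real d)"
  define y :: "real^'n" where "y = x + r /\<^sub>R real d"
  have ry: "r = real d *\<^sub>R (y - x)" using dpos unfolding y_def by simp
  have sumr: "(\<Sum>i\<in>UNIV. r$i) = 0"
  proof -
    have "(\<Sum>i\<in>UNIV. r$i) = (\<Sum>i\<in>UNIV. (if i \<in> P then 1 else 0)) - real d * (real k / real d)"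
      unfolding r_def by (simp add: sum_subtractf d_def)
    also have "\<dots> = 0" using P dpos by (simp add: sum.If_cases)
    finally show ?thesis .
  qed
  have xh: "x \<in> convex hull (range (\<lambda>i. axis i 1))"
    by (rule coords_hull) (use dpos in \<open>auto simp: x_def d_def\<close>)
  have yh: "y \<in> convex hull (range (\<lambda>i. axis i 1))"
  proof (rule coords_hull)
    show "\<forall>j. 0 \<le> y$j"
    proof
      fix j
      have "real k / real d \<le> 1" using kd dpos by simp
      then have "0 \<le> 1 + ((if j \<in> P then 1 else 0) - real k / real d)" by simp
      then have "0 \<le> (1 + ((if j \<in> P then 1 else 0) - real k / real d)) / real d" using dpos by simp
      have "real k \<le> real d" using kd by simp
      then show "0 \<le> y$j" unfolding y_def x_def r_def using dpos by (auto simp: field_simps)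
    qed
    have "(\<Sum>j\<in>UNIV. y$j) = (\<Sum>j\<in>UNIV. x$j) + (\<Sum>j\<in>UNIV. r$j) / real d"
      unfolding y_def by (simp add: sum.distrib sum_divide_distrib divide_inverse mult.commute sum_distrib_left)
    then show "(\<Sum>j\<in>UNIV. y$j) = 1" using sumr dpos by (simp add: x_def d_def)
  qed
  have nr2: "norm r ^ 2 = real k * (real d - real k) / real d"
  proof -
    have "norm r ^ 2 = (\<Sum>i\<in>UNIV. r$i * r$i)" by (simp add: power2_norm_eq_inner inner_vec_def)
    also have "\<dots> = (\<Sum>i\<in>UNIV. if i \<in> P then (1 - real k / real d)^2 else (real k / real d)^2)"
      unfolding r_def by (intro sum.cong) (auto simp: power2_eq_square)
    also have "\<dots> = real k * (1 - real k / real d)^2 + real (d - k) * (real k / real d)^2"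
      using P cP by (simp add: sum.If_cases Diff_eq[symmetric] Compl_eq_Diff_UNIV)
    also have "\<dots> = real k * (real d - real k) / real d"
      using dpos kd by (simp add: of_nat_diff field_simps power2_eq_square)
    finally show ?thesis .
  qed
  have gpos: "0 < real k * (real d - real k) / real d" using k0 kd2 dpos by simp
  have nr: "norm r = sqrt (real k * (real d - real k) / real d)"
    using nr2 by (metis norm_ge_zero real_sqrt_unique)
  have npos: "0 < norm r" using nr gpos by simp
  have cwr: "cw d = 1 / norm r"
  proof -
    have "cw d = sqrt (4 * real d / (4 * (real k * (real d - real k))))"
      unfolding cw_def k_def using k_identity[of d] by simp
    also have "\<dots> = sqrt (real d / (real k * (real d - real k)))" by simp
    also have "\<dots> = 1 / norm r" unfolding nr
      by (simp add: real_sqrt_divide)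
    finally show ?thesis .
  qed
  have rne: "r \<noteq> 0" using npos by auto
  have bound: "inner (r /\<^sub>R norm r) (axis i 1 - axis j 1) \<le> cw CARD('n)" for i j
  proof -
    have "r$i - r$j \<le> 1" unfolding r_def by simp
    then have "(r$i - r$j) / norm r \<le> 1 / norm r" using npos by (simp add: divide_right_mono)
    then show ?thesis using cwr unfolding d_def by (simp add: inner_axis_diff diff_divide_distrib divide_inverse mult.commute right_diff_distrib)
  qed
  show ?thesis
    using that[OF xh yh _ rne _ bound] ry unfolding d_def x_def by simp
qed


lemma finA: "finite (range (\<lambda>i. axis i (1::real) :: real^'n))" by simp

lemma argmax_ex: "\<exists>p. \<forall>i. f i \<le> (f p :: real)" for f :: "'n::finite \<Rightarrow> real"
proof -
  have "Max (range f) \<in> range f" by (rule Max_in) auto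
  then obtain p where fp: "f p = Max (range f)" by (metis rangeE)
  have "\<forall>i. f i \<le> Max (range f)" by simp
  then show ?thesis using fp by metis
qed

lemma argmin_ex: "\<exists>p. \<forall>i. f p \<le> (f i :: real)" for f :: "'n::finite \<Rightarrow> real"
  using argmax_ex[of "\<lambda>i. - f i"] by auto

lemma max_set_finite: "finite B \<Longrightarrow> finite S \<Longrightarrow> finite {inner u (s - v) | s v. s \<in> B \<and> v \<in> S}"
  unfolding pair_image[of "\<lambda>s v. inner u (s - v)"] by simp

lemma pdirw_lower:
  fixes r x :: "real^'n"
  defines "A \<equiv> range (\<lambda>i. axis i (1::real)) :: (real^'n) set"
  assumes d2: "CARD('n) \<ge> 2" and K: "K face_of convex hull A" and xK: "x \<in> K"
    and rc: "r \<in> nonneg_cone ((\<lambda>y. y - x) ` K)" and r0: "r \<noteq> 0"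
  shows "cw CARD('n) \<le> PdirW (K \<inter> A) r x"
proof -
  have fA: "finite A" unfolding A_def by simp
  obtain S' where S': "S' \<subseteq> A" "K = convex hull S'"
    using face_of_convex_hull_subset[OF finite_imp_compact[OF fA] K] by blast
  have KA: "K \<subseteq> convex hull A" using K face_of_imp_subset by blast
  obtain F c where F: "finite F" "F \<subseteq> (\<lambda>y. y - x) ` K" "\<forall>v\<in>F. 0 \<le> c v" "r = (\<Sum>v\<in>F. c v *\<^sub>R v)"
    using rc unfolding nonneg_cone_def by blast
  have rj: "r$j = (\<Sum>v\<in>F. c v * v$j)" for j using F(4) by simp
  have xh: "x \<in> convex hull A" using xK KA by blast
  have Fv: "\<exists>y\<in>K. v = y - x" if "v \<in> F" for v using F(2) that by blast
  have sumr: "(\<Sum>j\<in>UNIV. r$j) = 0"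
  proof -
    have "(\<Sum>j\<in>UNIV. r$j) = (\<Sum>v\<in>F. c v * (\<Sum>j\<in>UNIV. v$j))"
      unfolding rj by (simp add: sum_distrib_left sum.swap[of _ UNIV])
    also have "\<dots> = 0"
    proof (intro sum.neutral ballI)
      fix v assume "v \<in> F"
      then obtain y where y: "y \<in> K" "v = y - x" using Fv by blast
      have "(\<Sum>j\<in>UNIV. v$j) = (\<Sum>j\<in>UNIV. y$j) - (\<Sum>j\<in>UNIV. x$j)" using y(2) by (simp add: sum_subtractf)
      then show "c v * (\<Sum>j\<in>UNIV. v$j) = 0"
        using hull_coords[OF xh[unfolded A_def]] hull_coords[of y] y(1) KA unfolding A_def by auto
    qed
    finally show ?thesis .
  qed
  obtain p where p: "\<forall>i. r$i \<le> r$p" using argmax_ex[of "\<lambda>i. r$i"] by blast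
  obtain q where q: "\<forall>i. r$q \<le> r$i" using argmin_ex[of "\<lambda>i. r$i"] by blast
  have rq: "r$q < 0"
  proof (rule ccontr)
    assume "\<not> r$q < 0"
    then have "\<forall>i\<in>UNIV. 0 \<le> r$i" using q by (meson not_less order_trans)
    then have "\<forall>i\<in>UNIV. r$i = 0" using sumr sum_nonneg_eq_0_iff[of UNIV "\<lambda>i. r$i"] by simp
    then show False using r0 by (simp add: vec_eq_iff)
  qed
  have rp: "0 < r$p"
  proof (rule ccontr)
    assume "\<not> 0 < r$p"
    then have "\<forall>i\<in>UNIV. 0 \<le> - r$i" using p by (meson neg_0_le_iff_le not_less order_trans)
    moreover have "(\<Sum>i\<in>UNIV. - r$i) = 0" using sumr by (simp add: sum_negf)
    ultimately have "\<forall>i\<in>UNIV. - r$i = 0" using sum_nonneg_eq_0_iff[of UNIV "\<lambda>i. - r$i"] by simp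
    then show False using r0 by (simp add: vec_eq_iff)
  qed
  let ?B = "K \<inter> A"
  have fB: "finite ?B" using fA by simp
  have fPS: "finite (proper_supports ?B x)"
  proof (rule finite_subset[of _ "Pow ?B"])
    show "proper_supports ?B x \<subseteq> Pow ?B" by (auto simp: proper_supports_def)
    show "finite (Pow ?B)" using fB by (simp only: finite_Pow_iff)
  qed
  have fS': "finite S'" using S'(1) fA by (rule finite_subset)
  have S'K: "S' \<subseteq> K" unfolding S'(2) by (rule hull_subset)
  then have S'B: "S' \<subseteq> ?B" using S'(1) by blast
  have nePS: "proper_supports ?B x \<noteq> {}"
  proof -
    have "x \<in> convex hull S'" using xK S' by simp
    then obtain w where w: "\<forall>v\<in>S'. 0 \<le> w v" "sum w S' = 1" "(\<Sum>v\<in>S'. w v *\<^sub>R v) = x"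
      using convex_hull_finite[OF fS'] by blast
    define S0 where "S0 = {v\<in>S'. 0 < w v}"
    have "sum w S0 = sum w S'"
      by (rule sum.mono_neutral_left) (use fS' w(1) in \<open>auto simp: S0_def\<close>)
    moreover have "(\<Sum>v\<in>S0. w v *\<^sub>R v) = (\<Sum>v\<in>S'. w v *\<^sub>R v)"
      by (rule sum.mono_neutral_left) (use fS' w(1) in \<open>auto simp: S0_def\<close>)
    ultimately have e1: "sum w S0 = 1" "(\<Sum>v\<in>S0. w v *\<^sub>R v) = x" using w by auto
    have "S0 \<noteq> {}" using e1(1) by auto
    moreover have "S0 \<subseteq> ?B" using S'B by (auto simp: S0_def)
    moreover have "\<forall>v\<in>S0. 0 < w v" by (simp add: S0_def)
    ultimately have "S0 \<in> proper_supports ?B x"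
      unfolding proper_supports_def using e1 by blast
    then show ?thesis by blast
  qed
  define f where "f = (\<lambda>S. Max {inner (r /\<^sub>R norm r) (s - v) | s v. s \<in> ?B \<and> v \<in> S})"
  have "PdirW ?B r x = Min (f ` proper_supports ?B x)" unfolding PdirW_def f_def by simp
  moreover have "Min (f ` proper_supports ?B x) \<in> f ` proper_supports ?B x"
    by (rule Min_in) (use fPS nePS in auto)
  ultimately obtain S where S: "S \<in> proper_supports ?B x" "PdirW ?B r x = f S" by auto
  then obtain cc where cc: "S \<subseteq> ?B" "\<forall>v\<in>S. 0 < cc v" "(\<Sum>v\<in>S. cc v *\<^sub>R v) = x"
    unfolding proper_supports_def by blast
  have fS: "finite S" using cc(1) fB finite_subset by blast
  have eq: "axis q 1 \<in> S"
  proof (rule ccontr)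
    assume nq: "axis q 1 \<notin> S"
    have "x$q = (\<Sum>v\<in>S. cc v * v$q)" using cc(3)[symmetric] by simp
    also have "\<dots> = 0"
    proof (intro sum.neutral ballI)
      fix v assume "v \<in> S"
      then obtain i where "v = axis i 1" "i \<noteq> q" using cc(1) nq unfolding A_def by auto
      then show "cc v * v$q = 0" by (simp add: axis_nth_if)
    qed
    finally have xq: "x$q = 0" .
    have "0 \<le> r$q" unfolding rj
    proof (intro sum_nonneg)
      fix v assume "v \<in> F"
      then obtain y where y: "y \<in> K" "v = y - x" using Fv by blast
      have "0 \<le> y$q" using hull_coords[of y] y(1) KA unfolding A_def by auto
      then show "0 \<le> c v * v$q" using F(3) \<open>v \<in> F\<close> y(2) xq by simp
    qed
    then show False using rq by simp
  qed
  have ep: "axis p 1 \<in> K"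
  proof (rule ccontr)
    assume np: "axis p 1 \<notin> K"
    have "convex hull S' \<subseteq> {z. z$p = 0}"
    proof (rule hull_minimal)
      show "S' \<subseteq> {z. z$p = 0}"
      proof
        fix v assume "v \<in> S'"
        then obtain i where "v = axis i 1" "i \<noteq> p" proof -
          have "v \<in> A" "v \<noteq> axis p 1" using S'(1) S'K np \<open>v \<in> S'\<close> by auto
          then show ?thesis using that unfolding A_def by auto
        qed
        then show "v \<in> {z. z$p = 0}" by (simp add: axis_nth_if)
      qed
      show "convex {z::real^'n. z$p = 0}" unfolding convex_def by simp
    qed
    then have Kz: "\<forall>z\<in>K. z$p = 0" unfolding S'(2) by blast
    have "r$p = 0" unfolding rj
    proof (intro sum.neutral ballI)
      fix v assume "v \<in> F"
      then obtain y where y: "y \<in> K" "v = y - x" using Fv by blast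
      then show "c v * v$p = 0" using Kz xK by simp
    qed
    then show False using rp by simp
  qed
  have npos: "0 < norm r" using r0 by simp
  define u where "u = r /\<^sub>R norm r"
  have u_nth: "u$i = r$i / norm r" for i unfolding u_def by (simp add: divide_inverse mult.commute)
  have "cw CARD('n) \<le> u$p - u$q"
  proof (rule key[OF d2])
    show "(\<Sum>i\<in>UNIV. u$i) = 0" unfolding u_nth using sumr by (simp add: sum_divide_distrib[symmetric])
    show "norm u = 1" unfolding u_def using npos by simp
    show "\<forall>i. u$q \<le> u$i \<and> u$i \<le> u$p" unfolding u_nth using p q npos by (simp add: divide_right_mono)
  qed
  also have "\<dots> = inner u (axis p 1 - axis q 1)" by (simp add: inner_axis_diff)
  also have "\<dots> \<le> f S" unfolding f_def u_def
  proof (rule Max_ge)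
    show "finite {inner (r /\<^sub>R norm r) (s - v) | s v. s \<in> ?B \<and> v \<in> S}" by (rule max_set_finite[OF fB fS])
    show "inner (r /\<^sub>R norm r) (axis p 1 - axis q 1) \<in> {inner (r /\<^sub>R norm r) (s - v) | s v. s \<in> ?B \<and> v \<in> S}"
      using ep eq unfolding A_def by blast
  qed
  finally show ?thesis using S(2) by simp
qed


lemma cw_formula:
  assumes "2 \<le> d"
  shows "cw d = (if even d then 2 / sqrt (real d) else 2 / sqrt (real d - 1 / real d))"
proof -
  have dpos: "0 < real d" using assms by simp
  have s4: "sqrt 4 = 2" by (simp add: real_sqrt_eq_iff)
  show ?thesis
  proof (cases "even d")
    case True
    then have "d mod 2 = 0" by simp
    then have "cw d = sqrt (4 / real d)" unfolding cw_def using dpos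
      by (simp add: power2_eq_square)
    also have "\<dots> = 2 / sqrt (real d)" by (simp add: real_sqrt_divide s4)
    finally show ?thesis using True by simp
  next
    case False
    then have "d mod 2 = 1" by presburger
    moreover have "real d - 1 / real d = (real d ^ 2 - 1) / real d" using dpos
      by (simp add: field_simps power2_eq_square)
    moreover have "0 < real d ^ 2 - 1" using dd_pos[OF assms] \<open>d mod 2 = 1\<close> by simp
    ultimately have "2 / sqrt (real d - 1 / real d) = sqrt (4 * real d / (real d ^ 2 - real (d mod 2)))"
      using dpos by (simp add: real_sqrt_divide s4 field_simps real_sqrt_mult)
    then show ?thesis using False unfolding cw_def by simp
  qed
qed

theorem mainTheorem6:
  fixes A :: "(real ^ 'n) set"
  assumes "CARD('n) \<ge> 2"
    and "A = range (\<lambda>i. axis i 1)"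
  shows "PWidth A = simplex_width A \<and>
         simplex_width A = (if even CARD('n) then 2 / sqrt (real CARD('n))
                            else 2 / sqrt (real CARD('n) - 1 / real CARD('n)))"
proof -
  note d2 = assms(1)
  let ?c = "cw CARD('n)"
  have fA: "finite A" using assms(2) by simp
  obtain r x y :: "real^'n" where w:
    "x \<in> convex hull A" "y \<in> convex hull A"
    "r = real CARD('n) *\<^sub>R (y - x)" "r \<noteq> 0" "x = (\<chi> i. 1 / real CARD('n))"
    "\<And>i j. inner (r /\<^sub>R norm r) (axis i 1 - axis j 1) \<le> ?c"
    using witness[OF d2] unfolding assms(2) by metis
  have dpos: "0 < real CARD('n)" using d2 by simp
  define u where "u = r /\<^sub>R norm r"
  have maxle: "Max {inner u (s - v) | s v. s \<in> A \<and> v \<in> A} \<le> ?c"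
  proof (subst Max_le_iff)
    show "finite {inner u (s - v) | s v. s \<in> A \<and> v \<in> A}" by (rule max_set_finite[OF fA fA])
    show "{inner u (s - v) | s v. s \<in> A \<and> v \<in> A} \<noteq> {}" using assms(2) by blast
    show "\<forall>a\<in>{inner u (s - v) | s v. s \<in> A \<and> v \<in> A}. a \<le> ?c"
      using w(6) unfolding assms(2) u_def by auto
  qed
  let ?G = "{a - b | a b. a \<in> convex hull A \<and> b \<in> convex hull A}"
  have uspan: "u \<in> span ?G"
  proof -
    have "y - x \<in> span ?G" using w(1,2) by (intro span_base) blast
    then have "(real CARD('n) / norm r) *\<^sub>R (y - x) \<in> span ?G" by (rule span_mul)
    then show ?thesis unfolding u_def w(3) by (simp add: divide_inverse mult.commute)
  qed
  have un: "norm u = 1" unfolding u_def using w(4) by simp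
  have lowu: "?c \<le> Max {inner v (s - t) | s t. s \<in> A \<and> t \<in> A}"
    if "v \<in> span ?G" "norm v = 1" for v
  proof -
    have s0: "(\<Sum>j\<in>UNIV. v$j) = 0" using span_sum_zero that(1) unfolding assms(2) by blast
    obtain p where p: "\<forall>i. v$i \<le> v$p" using argmax_ex[of "\<lambda>i. v$i"] by blast
    obtain q where q: "\<forall>i. v$q \<le> v$i" using argmin_ex[of "\<lambda>i. v$i"] by blast
    have "?c \<le> v$p - v$q" using key[OF d2 s0 that(2)] p q by blast
    also have "\<dots> = inner v (axis p 1 - axis q 1)" by (simp add: inner_axis_diff)
    also have "\<dots> \<le> Max {inner v (s - t) | s t. s \<in> A \<and> t \<in> A}"
      by (rule Max_ge) (use max_set_finite[OF fA fA] assms(2) in auto)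
    finally show ?thesis .
  qed
  have SW: "simplex_width A = ?c"
    unfolding simplex_width_def
  proof (rule antisym)
    show "Inf {Max {inner u (s - v) | s v. s \<in> A \<and> v \<in> A} | u. u \<in> span ?G \<and> norm u = 1} \<le> ?c"
    proof (rule cInf_lower2)
      show "Max {inner u (s - v) | s v. s \<in> A \<and> v \<in> A} \<in> {Max {inner u (s - v) | s v. s \<in> A \<and> v \<in> A} | u. u \<in> span ?G \<and> norm u = 1}"
        using uspan un by blast
      show "bdd_below {Max {inner u (s - v) | s v. s \<in> A \<and> v \<in> A} | u. u \<in> span ?G \<and> norm u = 1}"
        unfolding bdd_below_def using lowu by blast
    qed (rule maxle)
    show "?c \<le> Inf {Max {inner u (s - v) | s v. s \<in> A \<and> v \<in> A} | u. u \<in> span ?G \<and> norm u = 1}"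
      by (rule cInf_greatest) (use uspan un lowu in auto)
  qed
  let ?P = "{PdirW (K \<inter> A) r x | K x r. K face_of convex hull A \<and> K \<noteq> {} \<and> x \<in> K \<and>
      r \<in> nonneg_cone ((\<lambda>y. y - x) ` K) \<and> r \<noteq> 0}"
  have lowP: "\<forall>z\<in>?P. ?c \<le> z"
    using pdirw_lower[OF d2] unfolding assms(2) by blast
  have inj: "inj (\<lambda>i. axis i (1::real) :: real^'n)" by (auto simp: inj_def axis_eq_axis)
  have cardA: "card A = CARD('n)" unfolding assms(2) using inj by (simp add: card_image)
  have APS: "A \<in> proper_supports A x"
  proof -
    have "(\<Sum>v\<in>A. (1 / real CARD('n)) *\<^sub>R v) = (\<Sum>i\<in>UNIV. (1 / real CARD('n)) *\<^sub>R (axis i 1 :: real^'n))"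
      unfolding assms(2) using inj by (simp add: sum.reindex)
    also have "\<dots> = x" unfolding w(5) by (simp add: vec_eq_iff axis_nth_if if_distrib cong: if_cong)
    finally have "(\<Sum>v\<in>A. (1 / real CARD('n)) *\<^sub>R v) = x" .
    moreover have "sum (\<lambda>_. 1 / real CARD('n)) A = 1" using cardA dpos by simp
    moreover have "A \<noteq> {}" using assms(2) by blast
    moreover have "\<forall>v\<in>A. 0 < (\<lambda>_. 1 / real CARD('n)) v" using dpos by simp
    ultimately show ?thesis unfolding proper_supports_def
      by (intro CollectI conjI exI[of _ "\<lambda>_. 1 / real CARD('n)"]) (rule subset_refl | assumption)+
  qed
  have PSfin: "finite (proper_supports A x)"
  proof (rule finite_subset[of _ "Pow A"])
    show "proper_supports A x \<subseteq> Pow A" by (auto simp: proper_supports_def)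
    show "finite (Pow A)" using fA by (simp only: finite_Pow_iff)
  qed
  have Pel: "PdirW A r x \<in> ?P"
  proof -
    have K: "convex hull A face_of convex hull A" by (rule face_of_refl) (rule convex_convex_hull)
    have "A \<subseteq> convex hull A" by (rule hull_subset)
    then have KA: "convex hull A \<inter> A = A" by (rule Int_absorb1)
    have rc: "r \<in> nonneg_cone ((\<lambda>y. y - x) ` (convex hull A))"
    proof -
      have h1: "{y - x} \<subseteq> (\<lambda>y. y - x) ` (convex hull A)" using w(2) by (intro subsetI) auto
      have h2: "r = (\<Sum>v\<in>{y - x}. real CARD('n) *\<^sub>R v)" unfolding w(3) by simp
      have h3: "\<forall>v\<in>{y - x}. 0 \<le> real CARD('n)" by simp
      show ?thesis unfolding nonneg_cone_def
        by (rule CollectI, rule exI[of _ "{y - x}"], rule exI[of _ "\<lambda>_. real CARD('n)"])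
           (intro conjI finite.intros h1 h2 h3)
    qed
    have e: "PdirW A r x = PdirW (convex hull A \<inter> A) r x" using KA by simp
    have ne: "convex hull A \<noteq> {}" using w(1) by blast
    show ?thesis unfolding e
      by (rule CollectI, rule exI[of _ "convex hull A"], rule exI[of _ x], rule exI[of _ r])
         (intro conjI refl K ne w(1) rc w(4))
  qed
  have Pup: "PdirW A r x \<le> ?c"
  proof -
    have "PdirW A r x \<le> Max {inner (r /\<^sub>R norm r) (s - v) | s v. s \<in> A \<and> v \<in> A}"
      unfolding PdirW_def
      by (rule Min_le) (use PSfin APS in auto)
    then show ?thesis using maxle unfolding u_def by linarith
  qed
  have PW: "PWidth A = ?c"
    unfolding PWidth_def
  proof (rule antisym)
    show "Inf ?P \<le> ?c"
      by (rule cInf_lower2[OF Pel]) (use lowP Pup in \<open>auto simp: bdd_below_def\<close>)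
    show "?c \<le> Inf ?P"
      by (rule cInf_greatest) (use Pel lowP in auto)
  qed
  show ?thesis using PW SW cw_formula[OF d2] by simp
qed

end
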